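(* Let $\Omega\subset\mathbb{R}^2$ be open, $\lambda>0$, and let $u\in L^2(\Omega)$ satisfy $-\Delta u=\lambda u$ in $\Omega$. Let $\mathbf{x}_0\in\Omega$, $h>0$, $\alpha\in(0,1)$, and let $\mathbf{e}^-,\mathbf{e}^+$ be unit vectors with angle $\alpha\pi$ from $\mathbf{e}^-$ to $\mathbf{e}^+$; put $\Gamma^\pm=\{\mathbf{x}_0+t\mathbf{e}^\pm:0\le t\le h\}\subset\Omega$. Suppose $u=0$ on $\Gamma^+\cup\Gamma^-$ (both are nodal lines). Let $n\in\mathbb{N}$, $n\ge3$. If $\alpha\neq q/p$ for all integers $1\le q<p\le n-1$, then $u$ vanishes up to the order $n$ at $\mathbf{x}_0$, i.e. all partial derivatives of $u$ of order at most $n-1$ vanish at $\mathbf{x}_0$.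
   Context: No boundary condition is imposed on $\partial\Omega$; $u$ is real-analytic in $\Omega$. "Vanishes up to order $n$" means every homogeneous term of degree $<n$ in the Taylor expansion of $u$ at $\mathbf{x}_0$ vanishes. *)

theory Defs
  imports "HOL-Analysis.Analysis"
begin

definition pdx :: "(real \<times> real \<Rightarrow> real) \<Rightarrow> real \<times> real \<Rightarrow> real" where
  "pdx f = (\<lambda>z. deriv (\<lambda>t. f (t, snd z)) (fst z))"

definition pdy :: "(real \<times> real \<Rightarrow> real) \<Rightarrow> real \<times> real \<Rightarrow> real" where
  "pdy f = (\<lambda>z. deriv (\<lambda>t. f (fst z, t)) (snd z))"

definition pder :: "nat \<Rightarrow> nat \<Rightarrow> (real \<times> real \<Rightarrow> real) \<Rightarrow> real \<times> real \<Rightarrow> real" where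
  "pder i j f = (pdx ^^ i) ((pdy ^^ j) f)"

definition smooth_on2 :: "(real \<times> real \<Rightarrow> real) \<Rightarrow> (real \<times> real) set \<Rightarrow> bool" where
  "smooth_on2 f S \<longleftrightarrow> (\<forall>i j. continuous_on S (pder i j f) \<and>
     (\<forall>z\<in>S. (\<lambda>t. pder i j f (t, snd z)) differentiable (at (fst z)) \<and>
            (\<lambda>t. pder i j f (fst z, t)) differentiable (at (snd z))))"

definition laplacian :: "(real \<times> real \<Rightarrow> real) \<Rightarrow> real \<times> real \<Rightarrow> real" where
  "laplacian f = (\<lambda>z. pdx (pdx f) z + pdy (pdy f) z)"

definition vanishes_up_to_order :: "(real \<times> real \<Rightarrow> real) \<Rightarrow> real \<times> real \<Rightarrow> nat \<Rightarrow> bool" where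
  "vanishes_up_to_order f x0 n \<longleftrightarrow> (\<forall>i j. i + j < n \<longrightarrow> pder i j f x0 = 0)"

definition rot :: "real \<Rightarrow> real \<times> real \<Rightarrow> real \<times> real" where
  "rot a v = (cos a * fst v - sin a * snd v, sin a * fst v + cos a * snd v)"

end

theory Submission
  imports Defs
begin


lemma schwarz_aux:
  fixes f fx fy D :: "real \<times> real \<Rightarrow> real"
  assumes S: "open S" and ab: "(a,b) \<in> S"
    and hx: "\<And>z. z \<in> S \<Longrightarrow> ((\<lambda>x. f (x, snd z)) has_real_derivative fx z) (at (fst z))"
    and hy: "\<And>z. z \<in> S \<Longrightarrow> ((\<lambda>y. f (fst z, y)) has_real_derivative fy z) (at (snd z))"
    and hD: "\<And>z. z \<in> S \<Longrightarrow> ((\<lambda>x. fy (x, snd z)) has_real_derivative D z) (at (fst z))"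
    and cD: "continuous (at (a,b)) D"
    and hL: "((\<lambda>y. fx (a, y)) has_real_derivative L) (at b)"
    and e: "e > 0"
  shows "\<bar>L - D (a,b)\<bar> \<le> e"
proof -
  obtain d1 where d1: "d1 > 0" "\<And>z. dist z (a,b) < d1 \<Longrightarrow> dist (D z) (D (a,b)) < e"
    using cD e unfolding continuous_at_eps_delta by blast
  obtain d2 where d2: "d2 > 0" "\<And>z. dist z (a,b) < d2 \<Longrightarrow> z \<in> S"
    using S ab unfolding open_dist by metis
  define d where "d = min d1 d2 / 2"
  have d: "d > 0" using d1 d2 by (simp add: d_def)
  have near: "z \<in> S \<and> \<bar>D z - D (a,b)\<bar> < e"
    if "\<bar>fst z - a\<bar> < d" "\<bar>snd z - b\<bar> < d" for z
  proof -
    have "dist z (a,b) \<le> \<bar>fst z - a\<bar> + \<bar>snd z - b\<bar>"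
      using sqrt_sum_squares_le_sum_abs[of "fst z - a" "snd z - b"]
      by (cases z) (simp add: dist_Pair_Pair dist_real_def)
    also have "\<dots> < min d1 d2" using that by (simp add: d_def)
    finally show ?thesis using d1 d2 by (simp add: dist_real_def)
  qed
  define Q where "Q s t = (f (a+s, b+t) - f (a+s, b) - f (a, b+t) + f (a, b)) / (s * t)" for s t
  have K: "\<bar>Q s t - D (a,b)\<bar> < e" if s: "0 < s" "s < d" and t: "0 < t" "t < d" for s t
  proof -
    define \<psi> where "\<psi> y = f (a+s, y) - f (a, y)" for y
    have "\<exists>\<eta>>b. \<eta> < b + t \<and> \<psi> (b+t) - \<psi> b = (b + t - b) * (fy (a+s, \<eta>) - fy (a, \<eta>))"
    proof (rule MVT2)
      show "b < b + t" using t by simp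
      fix y assume y: "b \<le> y" "y \<le> b + t"
      have "(a+s, y) \<in> S" "(a, y) \<in> S" using near[of "(a+s,y)"] near[of "(a,y)"] s t y d by auto
      from hy[OF this(1)] hy[OF this(2)]
      show "(\<psi> has_real_derivative (fy (a+s, y) - fy (a, y))) (at y)"
        unfolding \<psi>_def by (auto intro!: derivative_eq_intros)
    qed
    then obtain \<eta> where eta: "b < \<eta>" "\<eta> < b + t"
      and e1: "\<psi> (b+t) - \<psi> b = t * (fy (a+s, \<eta>) - fy (a, \<eta>))" by auto
    have "\<exists>\<xi>>a. \<xi> < a + s \<and> fy (a+s, \<eta>) - fy (a, \<eta>) = (a + s - a) * D (\<xi>, \<eta>)"
    proof (rule MVT2[where f = "\<lambda>x. fy (x, \<eta>)"])
      show "a < a + s" using s by simp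
      fix x assume x: "a \<le> x" "x \<le> a + s"
      have "(x, \<eta>) \<in> S" using near[of "(x,\<eta>)"] s t x eta d by auto
      from hD[OF this] show "((\<lambda>x. fy (x, \<eta>)) has_real_derivative D (x, \<eta>)) (at x)" by simp
    qed
    then obtain \<xi> where xi: "a < \<xi>" "\<xi> < a + s"
      and e2: "fy (a+s, \<eta>) - fy (a, \<eta>) = s * D (\<xi>, \<eta>)" by auto
    have "Q s t = D (\<xi>, \<eta>)"
      using e1 e2 s t unfolding Q_def \<psi>_def by (simp add: field_simps)
    moreover have "\<bar>D (\<xi>, \<eta>) - D (a,b)\<bar> < e"
      using near[of "(\<xi>,\<eta>)"] xi eta s t by auto
    ultimately show ?thesis by simp
  qed
  have K2: "\<bar>(fx (a, b+t) - fx (a, b)) / t - D (a,b)\<bar> \<le> e" if t: "0 < t" "t < d" for t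
  proof -
    have m1: "(a, b+t) \<in> S" "(a, b) \<in> S" using near[of "(a,b+t)"] near[of "(a,b)"] t d by auto
    have l1: "((\<lambda>s. (f (a + s, b+t) - f (a, b+t)) / s) \<longlongrightarrow> fx (a, b+t)) (at 0)"
      using hx[OF m1(1)] unfolding DERIV_def by (simp add: add.commute)
    have l2: "((\<lambda>s. (f (a + s, b) - f (a, b)) / s) \<longlongrightarrow> fx (a, b)) (at 0)"
      using hx[OF m1(2)] unfolding DERIV_def by (simp add: add.commute)
    have l3: "((\<lambda>s. \<bar>((f (a + s, b+t) - f (a, b+t)) / s - (f (a + s, b) - f (a, b)) / s) / t - D (a,b)\<bar>)
         \<longlongrightarrow> \<bar>(fx (a, b+t) - fx (a, b)) / t - D (a,b)\<bar>) (at_right 0)"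
    proof -
      have "((\<lambda>s. (f (a + s, b+t) - f (a, b+t)) / s) \<longlongrightarrow> fx (a, b+t)) (at_right 0)"
        using l1 filterlim_at_split by blast
      moreover have "((\<lambda>s. (f (a + s, b) - f (a, b)) / s) \<longlongrightarrow> fx (a, b)) (at_right 0)"
        using l2 filterlim_at_split by blast
      ultimately show ?thesis using t by (intro tendsto_intros) auto
    qed
    have ev: "\<forall>\<^sub>F s in at_right 0. \<bar>((f (a + s, b+t) - f (a, b+t)) / s - (f (a + s, b) - f (a, b)) / s) / t - D (a,b)\<bar> \<le> e"
      unfolding eventually_at_right_field
    proof (intro exI conjI allI impI)
      show "(0::real) < d" by (rule d)
      fix s :: real assume s: "0 < s" "s < d"
      have "((f (a + s, b+t) - f (a, b+t)) / s - (f (a + s, b) - f (a, b)) / s) / t = Q s t"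
        unfolding Q_def using s t by (simp add: field_simps)
      then show "\<bar>((f (a + s, b+t) - f (a, b+t)) / s - (f (a + s, b) - f (a, b)) / s) / t - D (a,b)\<bar> \<le> e"
        using K[OF s t] by simp
    qed
    show ?thesis using tendsto_upperbound[OF l3 ev] by simp
  qed
  have l4: "((\<lambda>t. \<bar>(fx (a, b+t) - fx (a, b)) / t - D (a,b)\<bar>) \<longlongrightarrow> \<bar>L - D (a,b)\<bar>) (at_right 0)"
  proof -
    have "((\<lambda>t. (fx (a, b+t) - fx (a, b)) / t) \<longlongrightarrow> L) (at 0)"
      using hL unfolding DERIV_def by (simp add: add.commute)
    then have "((\<lambda>t. (fx (a, b+t) - fx (a, b)) / t) \<longlongrightarrow> L) (at_right 0)"
      using filterlim_at_split by blast
    then show ?thesis by (intro tendsto_intros)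
  qed
  have ev2: "\<forall>\<^sub>F t in at_right 0. \<bar>(fx (a, b+t) - fx (a, b)) / t - D (a,b)\<bar> \<le> e"
    unfolding eventually_at_right_field using d K2 by blast
  show ?thesis using tendsto_upperbound[OF l4 ev2] by simp
qed

lemma schwarz:
  fixes f fx fy D :: "real \<times> real \<Rightarrow> real"
  assumes S: "open S" and ab: "(a,b) \<in> S"
    and hx: "\<And>z. z \<in> S \<Longrightarrow> ((\<lambda>x. f (x, snd z)) has_real_derivative fx z) (at (fst z))"
    and hy: "\<And>z. z \<in> S \<Longrightarrow> ((\<lambda>y. f (fst z, y)) has_real_derivative fy z) (at (snd z))"
    and hD: "\<And>z. z \<in> S \<Longrightarrow> ((\<lambda>x. fy (x, snd z)) has_real_derivative D z) (at (fst z))"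
    and cD: "continuous (at (a,b)) D"
    and hL: "((\<lambda>y. fx (a, y)) has_real_derivative L) (at b)"
  shows "L = D (a,b)"
proof (rule ccontr)
  assume "L \<noteq> D (a,b)"
  then have p: "\<bar>L - D (a,b)\<bar> / 2 > 0" by simp
  have "\<bar>L - D (a,b)\<bar> \<le> \<bar>L - D (a,b)\<bar> / 2"
    by (rule schwarz_aux[OF S ab _ _ _ cD hL p]) (fact hx hy hD)+
  with p show False by (smt (verit) field_sum_of_halves)
qed


lemma fderiv_partials:
  fixes f fx fy :: "real \<times> real \<Rightarrow> real"
  assumes S: "open S" and p: "p \<in> S"
    and hx: "\<And>z. z \<in> S \<Longrightarrow> ((\<lambda>x. f (x, snd z)) has_real_derivative fx z) (at (fst z))"
    and hy: "\<And>z. z \<in> S \<Longrightarrow> ((\<lambda>y. f (fst z, y)) has_real_derivative fy z) (at (snd z))"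
    and cy: "continuous_on S fy"
  shows "(f has_derivative (\<lambda>v. fx p * fst v + fy p * snd v)) (at p)"
proof -
  obtain a b where pab: "p = (a,b)" by (cases p)
  obtain r0 where r0: "r0 > 0" "ball p r0 \<subseteq> S" using S p openE by blast
  define r where "r = r0 / 2"
  have r: "r > 0" using r0 by (simp add: r_def)
  have sub: "ball a r \<times> ball b r \<subseteq> S"
  proof
    fix z assume z: "z \<in> ball a r \<times> ball b r"
    obtain x y where zxy: "z = (x,y)" by (cases z)
    have "dist p z \<le> \<bar>a - x\<bar> + \<bar>b - y\<bar>"
      using sqrt_sum_squares_le_sum_abs[of "a - x" "b - y"]
      by (simp add: pab zxy dist_Pair_Pair dist_real_def)
    also have "\<dots> < r0" using z by (simp add: zxy r_def dist_real_def)
    finally show "z \<in> S" using r0 by auto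
  qed
  have opn: "open (ball a r \<times> ball b r)" by (simp add: open_Times)
  have mem: "(a,b) \<in> ball a r \<times> ball b r" using r by simp
  have "((\<lambda>(x, y). f (x, y)) has_derivative
      (\<lambda>(tx, ty). (*) (fx p) tx + blinfun_apply (blinfun_mult_right (fy (a, b))) ty))
      (at (a, b) within ball a r \<times> ball b r)"
  proof (rule has_derivative_partialsI)
    show "((\<lambda>x. f (x, b)) has_derivative (*) (fx p)) (at a within ball a r)"
      using hx[OF p] unfolding pab has_field_derivative_def by (auto intro: has_derivative_at_withinI)
    fix x y assume xy: "x \<in> ball a r" "y \<in> ball b r"
    then have "(x,y) \<in> S" using sub by auto
    from hy[OF this] show "((\<lambda>y. f (x, y)) has_derivative blinfun_apply (blinfun_mult_right (fy (x, y)))) (at y within ball b r)"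
      unfolding has_field_derivative_def by (auto intro: has_derivative_at_withinI)
  next
    have "isCont fy (a,b)" using cy S p pab continuous_on_eq_continuous_at by blast
    then have "isCont (\<lambda>z. blinfun_mult_right (fy z)) (a,b)"
      by (intro continuous_intros)
    then show "continuous (at (a, b) within ball a r \<times> ball b r) (\<lambda>(x, y). blinfun_mult_right (fy (x, y)))"
      by (simp add: continuous_at_imp_continuous_within case_prod_beta')
  qed (use r in auto)
  then have "(f has_derivative (\<lambda>v. fx p * fst v + fy p * snd v)) (at (a, b) within ball a r \<times> ball b r)"
    by (simp add: case_prod_beta' pab)
  then show ?thesis using at_within_open[OF mem opn] pab by simp
qed

lemma dir_deriv:
  fixes f fx fy :: "real \<times> real \<Rightarrow> real"
  assumes S: "open S" and p: "q + t *\<^sub>R e \<in> S"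
    and hx: "\<And>z. z \<in> S \<Longrightarrow> ((\<lambda>x. f (x, snd z)) has_real_derivative fx z) (at (fst z))"
    and hy: "\<And>z. z \<in> S \<Longrightarrow> ((\<lambda>y. f (fst z, y)) has_real_derivative fy z) (at (snd z))"
    and cy: "continuous_on S fy"
  shows "((\<lambda>s. f (q + s *\<^sub>R e)) has_real_derivative
           (fst e * fx (q + t *\<^sub>R e) + snd e * fy (q + t *\<^sub>R e))) (at t)"
proof -
  have d1: "((\<lambda>s. q + s *\<^sub>R e) has_derivative (\<lambda>s. s *\<^sub>R e)) (at t)"
    by (auto intro!: derivative_eq_intros)
  note d2 = fderiv_partials[OF S p hx hy cy]
  show ?thesis
    unfolding has_field_derivative_def
    by (rule has_derivative_eq_rhs[OF has_derivative_compose[OF d1 d2]]) (auto simp: algebra_simps fun_eq_iff)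
qed


fun wc :: "real \<times> real \<Rightarrow> nat \<Rightarrow> nat \<Rightarrow> real" where
  "wc e 0 k = (if k = 0 then 1 else 0)"
| "wc e (Suc m) k = fst e * wc e m k + (if k = 0 then 0 else snd e * wc e m (k - 1))"

lemma wc_zero: "m < k \<Longrightarrow> wc e m k = 0"
  by (induction m arbitrary: k) auto

lemma wc_step:
  fixes G :: "nat \<Rightarrow> nat \<Rightarrow> 'a::real_vector"
  shows "(\<Sum>k\<le>Suc m. wc e (Suc m) k *\<^sub>R G (Suc m - k) k) =
     fst e *\<^sub>R (\<Sum>k\<le>m. wc e m k *\<^sub>R G (Suc (m - k)) k) + snd e *\<^sub>R (\<Sum>k\<le>m. wc e m k *\<^sub>R G (m - k) (Suc k))"
proof -
  have "(\<Sum>k\<le>Suc m. wc e (Suc m) k *\<^sub>R G (Suc m - k) k) =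
        (\<Sum>k\<le>Suc m. (fst e * wc e m k) *\<^sub>R G (Suc m - k) k) +
        (\<Sum>k\<le>Suc m. (if k = 0 then 0 else snd e * wc e m (k - 1)) *\<^sub>R G (Suc m - k) k)"
    by (simp add: scaleR_add_left sum.distrib)
  also have "(\<Sum>k\<le>Suc m. (fst e * wc e m k) *\<^sub>R G (Suc m - k) k) = fst e *\<^sub>R (\<Sum>k\<le>m. wc e m k *\<^sub>R G (Suc (m - k)) k)"
    by (simp add: wc_zero scaleR_sum_right Suc_diff_le)
  also have "(\<Sum>k\<le>Suc m. (if k = 0 then 0 else snd e * wc e m (k - 1)) *\<^sub>R G (Suc m - k) k) =
      snd e *\<^sub>R (\<Sum>k\<le>m. wc e m k *\<^sub>R G (m - k) (Suc k))"
    by (simp add: sum.atMost_Suc_shift scaleR_sum_right del: sum.atMost_Suc)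
  finally show ?thesis .
qed

lemma wc_poly:
  fixes z :: complex
  shows "(\<Sum>k\<le>m. wc e m k *\<^sub>R z ^ k) = (of_real (fst e) + of_real (snd e) * z) ^ m"
proof (induction m)
  case 0 then show ?case by simp
next
  case (Suc m)
  have "(\<Sum>k\<le>Suc m. wc e (Suc m) k *\<^sub>R z ^ k) =
     fst e *\<^sub>R (\<Sum>k\<le>m. wc e m k *\<^sub>R z ^ k) + snd e *\<^sub>R (\<Sum>k\<le>m. wc e m k *\<^sub>R z ^ Suc k)"
    using wc_step[of e m "\<lambda>i k. z ^ k"] by simp
  also have "(\<Sum>k\<le>m. wc e m k *\<^sub>R z ^ Suc k) = z * (\<Sum>k\<le>m. wc e m k *\<^sub>R z ^ k)"
    by (simp add: sum_distrib_left algebra_simps)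
  finally show ?case using Suc by (simp add: scaleR_conv_of_real algebra_simps)
qed



lemma wc_trig:
  assumes ck: "\<And>k. k \<le> m \<Longrightarrow> c k = Re (\<zeta> * \<i> ^ k)"
  shows "(\<Sum>k\<le>m. wc (cos \<psi>, sin \<psi>) m k * c k) = Re (\<zeta> * cis (real m * \<psi>))"
proof -
  have "(\<Sum>k\<le>m. wc (cos \<psi>, sin \<psi>) m k * c k) = (\<Sum>k\<le>m. Re (\<zeta> * (wc (cos \<psi>, sin \<psi>) m k *\<^sub>R \<i> ^ k)))"
    by (intro sum.cong) (auto simp: ck scaleR_conv_of_real algebra_simps)
  also have "\<dots> = Re (\<zeta> * (\<Sum>k\<le>m. wc (cos \<psi>, sin \<psi>) m k *\<^sub>R \<i> ^ k))"
    by (simp add: Re_sum sum_distrib_left)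
  also have "(\<Sum>k\<le>m. wc (cos \<psi>, sin \<psi>) m k *\<^sub>R \<i> ^ k) = cis \<psi> ^ m"
  proof -
    have "of_real (cos \<psi>) + of_real (sin \<psi>) * \<i> = cis \<psi>" by (simp add: complex_eq_iff)
    then show ?thesis using wc_poly[of "(cos \<psi>, sin \<psi>)" m \<i>] by simp
  qed
  finally show ?thesis by (simp add: Complex.DeMoivre)
qed

lemma key_alg:
  fixes c :: "nat \<Rightarrow> real"
  assumes m: "m \<ge> 1" and rel: "\<And>k. k + 2 \<le> m \<Longrightarrow> c (k + 2) = - c k"
    and v1: "(\<Sum>k\<le>m. wc (cos \<theta>, sin \<theta>) m k * c k) = 0"
    and v2: "(\<Sum>k\<le>m. wc (cos (\<theta> + \<phi>), sin (\<theta> + \<phi>)) m k * c k) = 0"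
    and s: "sin (real m * \<phi>) \<noteq> 0"
  shows "k \<le> m \<Longrightarrow> c k = 0"
proof -
  define \<zeta> where "\<zeta> = Complex (c 0) (- c 1)"
  have two: "k + 1 \<le> m \<longrightarrow> c k = Re (\<zeta> * \<i> ^ k) \<and> c (k+1) = Re (\<zeta> * \<i> ^ (k+1))" for k
  proof (induction k)
    case 0 then show ?case by (simp add: \<zeta>_def)
  next
    case (Suc k)
    show ?case
    proof
      assume a: "Suc k + 1 \<le> m"
      then have "c (k + 2) = - c k" using rel by simp
      moreover have "\<i> ^ (k + 2) = -(\<i> ^ k)" by (simp add: power_add)
      ultimately show "c (Suc k) = Re (\<zeta> * \<i> ^ Suc k) \<and> c (Suc k + 1) = Re (\<zeta> * \<i> ^ (Suc k + 1))"
        using Suc a by (simp add: numeral_2_eq_2)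
    qed
  qed
  have ck: "c k = Re (\<zeta> * \<i> ^ k)" if "k \<le> m" for k
  proof (cases "k + 1 \<le> m")
    case True then show ?thesis using two by blast
  next
    case False
    then have "k = (k - 1) + 1" "(k - 1) + 1 \<le> m" using m that by auto
    then show ?thesis using two[of "k - 1"] by metis
  qed
  define w where "w = \<zeta> * cis (real m * \<theta>)"
  have r1: "Re w = 0" using v1 wc_trig[of m c \<zeta> \<theta>] ck by (simp add: w_def)
  have "Re (w * cis (real m * \<phi>)) = 0"
  proof -
    have "w * cis (real m * \<phi>) = \<zeta> * cis (real m * (\<theta> + \<phi>))"
      by (simp add: w_def cis_mult distrib_left mult.assoc)
    then show ?thesis using v2 wc_trig[of m c \<zeta> "\<theta> + \<phi>"] ck by simp
  qed
  then have "Im w * sin (real m * \<phi>) = 0" using r1 by simp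
  then have "Im w = 0" using s by simp
  then have "w = 0" using r1 by (simp add: complex_eq_iff)
  then have "\<zeta> = 0" by (simp add: w_def)
  then show "k \<le> m \<Longrightarrow> c k = 0" using ck by simp
qed


lemma pder_Suc_x: "pdx (pder i j u) = pder (Suc i) j u"
  by (simp add: pder_def)

lemma pder_0_Suc_y: "pdy (pder 0 j u) = pder 0 (Suc j) u"
  by (simp add: pder_def)

lemma pder_00: "pder 0 0 u = u" by (simp add: pder_def)

definition dsum :: "(real \<times> real \<Rightarrow> real) \<Rightarrow> real \<times> real \<Rightarrow> nat \<Rightarrow> real \<times> real \<Rightarrow> real" where
  "dsum u e m z = (\<Sum>k\<le>m. wc e m k * pder (m - k) k u z)"

context
  fixes u :: "real \<times> real \<Rightarrow> real" and \<Omega> :: "(real \<times> real) set"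
  assumes op: "open \<Omega>" and sm: "smooth_on2 u \<Omega>"
begin

lemma F_cont: "continuous_on \<Omega> (pder i j u)"
  using sm by (simp add: smooth_on2_def)

lemma F_dx: "z \<in> \<Omega> \<Longrightarrow> ((\<lambda>t. pder i j u (t, snd z)) has_real_derivative pder (Suc i) j u z) (at (fst z))"
  using sm unfolding smooth_on2_def
  by (simp add: DERIV_deriv_iff_real_differentiable pdx_def flip: pder_Suc_x)

lemma F_dy0: "z \<in> \<Omega> \<Longrightarrow> ((\<lambda>t. pder i j u (fst z, t)) has_real_derivative pdy (pder i j u) z) (at (snd z))"
  using sm unfolding smooth_on2_def
  by (simp add: DERIV_deriv_iff_real_differentiable pdy_def)

lemma F_sw: "z \<in> \<Omega> \<Longrightarrow> pdy (pder i j u) z = pder i (Suc j) u z"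
proof (induction i arbitrary: j z)
  case 0 then show ?case by (simp add: pder_0_Suc_y)
next
  case (Suc i)
  obtain a b where zab: "z = (a,b)" by (cases z)
  have "pdy (pder (Suc i) j u) (a,b) = pder (Suc i) (Suc j) u (a,b)"
  proof (rule schwarz[OF op])
    show "(a,b) \<in> \<Omega>" using Suc zab by simp
    show "\<And>z. z \<in> \<Omega> \<Longrightarrow> ((\<lambda>x. pder i j u (x, snd z)) has_real_derivative pder (Suc i) j u z) (at (fst z))"
      by (rule F_dx)
    show "\<And>z. z \<in> \<Omega> \<Longrightarrow> ((\<lambda>y. pder i j u (fst z, y)) has_real_derivative pder i (Suc j) u z) (at (snd z))"
      using F_dy0 Suc.IH by metis
    show "\<And>z. z \<in> \<Omega> \<Longrightarrow> ((\<lambda>x. pder i (Suc j) u (x, snd z)) has_real_derivative pder (Suc i) (Suc j) u z) (at (fst z))"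
      by (rule F_dx)
    show "isCont (pder (Suc i) (Suc j) u) (a, b)"
      using F_cont op \<open>(a,b) \<in> \<Omega>\<close> continuous_on_eq_continuous_at by blast
    show "((\<lambda>y. pder (Suc i) j u (a, y)) has_real_derivative pdy (pder (Suc i) j u) (a, b)) (at b)"
      using F_dy0[of "(a,b)"] \<open>(a,b) \<in> \<Omega>\<close> by simp
  qed
  then show ?case using zab by simp
qed

lemma F_dy: "z \<in> \<Omega> \<Longrightarrow> ((\<lambda>t. pder i j u (fst z, t)) has_real_derivative pder i (Suc j) u z) (at (snd z))"
  using F_dy0 F_sw by metis

lemma zero_deriv_y:
  assumes z: "z \<in> \<Omega>" and g0: "\<And>w. w \<in> \<Omega> \<Longrightarrow> g w = 0"
    and d: "((\<lambda>t. g (fst z, t)) has_real_derivative c) (at (snd z))"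
  shows "c = 0"
proof -
  have o0: "open ((\<lambda>t. (fst z, t)) -` \<Omega>)"
    by (rule open_vimage[OF op]) (intro continuous_intros)
  then have o: "open {t. (fst z, t) \<in> \<Omega>}" by (simp add: vimage_def)
  have "((\<lambda>t. g (fst z, t)) has_real_derivative 0) (at (snd z))"
    by (rule has_field_derivative_transform_within_open[OF DERIV_const o]) (use z g0 in auto)
  then show ?thesis using d DERIV_unique by blast
qed

lemma zero_deriv_x:
  assumes z: "z \<in> \<Omega>" and g0: "\<And>w. w \<in> \<Omega> \<Longrightarrow> g w = 0"
    and d: "((\<lambda>t. g (t, snd z)) has_real_derivative c) (at (fst z))"
  shows "c = 0"
proof -
  have o0: "open ((\<lambda>t. (t, snd z)) -` \<Omega>)"
    by (rule open_vimage[OF op]) (intro continuous_intros)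
  then have o: "open {t. (t, snd z) \<in> \<Omega>}" by (simp add: vimage_def)
  have "((\<lambda>t. g (t, snd z)) has_real_derivative 0) (at (fst z))"
    by (rule has_field_derivative_transform_within_open[OF DERIV_const o]) (use z g0 in auto)
  then show ?thesis using d DERIV_unique by blast
qed

lemma LAP0:
  assumes lapl: "\<forall>z\<in>\<Omega>. - laplacian u z = lam * u z"
  shows "z \<in> \<Omega> \<Longrightarrow> pder 2 j u z + pder 0 (j+2) u z + lam * pder 0 j u z = 0"
proof (induction j arbitrary: z)
  case 0
  then have h: "- laplacian u z = lam * u z" using lapl by blast
  have "pder 2 0 u z + pder 0 2 u z = laplacian u z" by (simp add: pder_def numeral_2_eq_2 laplacian_def)
  with h show ?case by (simp add: pder_00 numeral_2_eq_2)
next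
  case (Suc j)
  have "((\<lambda>t. pder 2 j u (fst z, t) + pder 0 (j+2) u (fst z, t) + lam * pder 0 j u (fst z, t))
      has_real_derivative (pder 2 (Suc j) u z + pder 0 (Suc (j+2)) u z + lam * pder 0 (Suc j) u z)) (at (snd z))"
    using F_dy[OF Suc.prems, of 2 j] F_dy[OF Suc.prems, of 0 "j+2"] F_dy[OF Suc.prems, of 0 j]
    by (auto intro!: derivative_eq_intros)
  from zero_deriv_y[OF Suc.prems _ this] Suc.IH
  show ?case by simp
qed

lemma LAP:
  assumes lapl: "\<forall>z\<in>\<Omega>. - laplacian u z = lam * u z"
  shows "z \<in> \<Omega> \<Longrightarrow> pder (i+2) j u z + pder i (j+2) u z + lam * pder i j u z = 0"
proof (induction i arbitrary: z)
  case 0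
  then show ?case using LAP0[OF lapl, of z j] by (simp add: numeral_2_eq_2)
next
  case (Suc i)
  have "((\<lambda>t. pder (i+2) j u (t, snd z) + pder i (j+2) u (t, snd z) + lam * pder i j u (t, snd z))
      has_real_derivative (pder (Suc (i+2)) j u z + pder (Suc i) (j+2) u z + lam * pder (Suc i) j u z)) (at (fst z))"
    using F_dx[OF Suc.prems, of "i+2" j] F_dx[OF Suc.prems, of i "j+2"] F_dx[OF Suc.prems, of i j]
    by (auto intro!: derivative_eq_intros)
  from zero_deriv_x[OF Suc.prems _ this] Suc.IH
  show ?case by simp
qed

lemma E_deriv:
  assumes p: "q + t *\<^sub>R e \<in> \<Omega>"
  shows "((\<lambda>s. dsum u e m (q + s *\<^sub>R e)) has_real_derivative dsum u e (Suc m) (q + t *\<^sub>R e)) (at t)"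
proof -
  define p where "p = q + t *\<^sub>R e"
  have "((\<lambda>s. dsum u e m (q + s *\<^sub>R e)) has_real_derivative
     (\<Sum>k\<le>m. wc e m k * (fst e * pder (Suc (m-k)) k u p + snd e * pder (m-k) (Suc k) u p))) (at t)"
    unfolding dsum_def p_def
    by (intro DERIV_sum DERIV_cmult dir_deriv[OF op p F_dx F_dy F_cont])
  also have "(\<Sum>k\<le>m. wc e m k * (fst e * pder (Suc (m-k)) k u p + snd e * pder (m-k) (Suc k) u p))
     = dsum u e (Suc m) p"
  proof -
    have ws: "(\<Sum>k\<le>Suc m. wc e (Suc m) k * pder (Suc m - k) k u p) = fst e * (\<Sum>k\<le>m. wc e m k * pder (Suc (m-k)) k u p) + snd e * (\<Sum>k\<le>m. wc e m k * pder (m-k) (Suc k) u p)"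
      using wc_step[of e m "\<lambda>i k. pder i k u p"] by (simp only: real_scaleR_def)
    show ?thesis unfolding dsum_def ws
      by (simp add: distrib_left sum.distrib sum_distrib_left mult.left_commute del: wc.simps)
  qed
  finally show ?thesis by (simp add: p_def)
qed

lemma dsum_cont: "continuous_on \<Omega> (dsum u e m)"
  unfolding dsum_def by (intro continuous_intros F_cont)

lemma ray_zero:
  assumes h: "h > 0" and seg: "\<And>t. 0 \<le> t \<Longrightarrow> t \<le> h \<Longrightarrow> x0 + t *\<^sub>R e \<in> \<Omega>"
    and zero: "\<And>t. 0 \<le> t \<Longrightarrow> t \<le> h \<Longrightarrow> u (x0 + t *\<^sub>R e) = 0"
  shows "dsum u e m x0 = 0"
proof -
  have inner: "0 < t \<Longrightarrow> t < h \<Longrightarrow> dsum u e m (x0 + t *\<^sub>R e) = 0" for t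
  proof (induction m arbitrary: t)
    case 0
    then show ?case using zero[of t] by (simp add: dsum_def pder_00)
  next
    case (Suc m)
    have tS: "x0 + t *\<^sub>R e \<in> \<Omega>" using seg Suc.prems by simp
    note d1 = E_deriv[OF tS, of m]
    have "((\<lambda>s. dsum u e m (x0 + s *\<^sub>R e)) has_real_derivative 0) (at t)"
    proof (rule has_field_derivative_transform_within_open[OF DERIV_const open_greaterThanLessThan[of 0 h]])
      show "t \<in> {0<..<h}" using Suc.prems by simp
      fix x :: real assume "x \<in> {0<..<h}"
      then show "0 = dsum u e m (x0 + x *\<^sub>R e)" using Suc.IH by simp
    qed
    from DERIV_unique[OF d1 this] show ?case .
  qed
  have x0: "x0 \<in> \<Omega>" using seg[of 0] h by simp
  have "isCont (dsum u e m) x0"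
    using continuous_on_eq_continuous_at[OF op] dsum_cont x0 by blast
  then have c1: "isCont (dsum u e m) (x0 + 0 *\<^sub>R e)" by simp
  have c0: "isCont (\<lambda>t. x0 + t *\<^sub>R e) 0" by (intro continuous_intros)
  have "isCont (\<lambda>t. dsum u e m (x0 + t *\<^sub>R e)) 0"
    by (rule isCont_o2[OF c0 c1])
  then have "((\<lambda>t. dsum u e m (x0 + t *\<^sub>R e)) \<longlongrightarrow> dsum u e m x0) (at 0)"
    by (simp add: isCont_def)
  then have lim: "((\<lambda>t. dsum u e m (x0 + t *\<^sub>R e)) \<longlongrightarrow> dsum u e m x0) (at_right 0)"
    by (simp add: filterlim_at_split)
  have ev: "\<forall>\<^sub>F t in at_right 0. dsum u e m (x0 + t *\<^sub>R e) = 0"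
    unfolding eventually_at_right_field using h inner by blast
  have "((\<lambda>t. 0) \<longlongrightarrow> dsum u e m x0) (at_right (0::real))"
    by (rule Lim_transform_eventually[OF lim ev])
  then show ?thesis by (simp add: tendsto_const_iff)
qed

end

theorem theorem3p2:
  fixes \<Omega> :: "(real \<times> real) set" and u :: "real \<times> real \<Rightarrow> real"
    and lam h \<alpha> :: real and x0 em ep :: "real \<times> real" and n :: nat
  assumes "open \<Omega>" and "lam > 0"
    and "(\<lambda>z. (u z)\<^sup>2) integrable_on \<Omega>"
    and "smooth_on2 u \<Omega>"
    and "\<forall>z\<in>\<Omega>. - laplacian u z = lam * u z"
    and "x0 \<in> \<Omega>" and "h > 0" and "0 < \<alpha>" and "\<alpha> < 1"
    and "norm em = 1" and "ep = rot (\<alpha> * pi) em"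
    and "{x0 + t *\<^sub>R ep | t. 0 \<le> t \<and> t \<le> h} \<subseteq> \<Omega>"
    and "{x0 + t *\<^sub>R em | t. 0 \<le> t \<and> t \<le> h} \<subseteq> \<Omega>"
    and "\<forall>t. 0 \<le> t \<and> t \<le> h \<longrightarrow> u (x0 + t *\<^sub>R ep) = 0"
    and "\<forall>t. 0 \<le> t \<and> t \<le> h \<longrightarrow> u (x0 + t *\<^sub>R em) = 0"
    and "n \<ge> 3"
    and "\<forall>p q :: int. 1 \<le> q \<and> q < p \<and> p \<le> int n - 1 \<longrightarrow> \<alpha> \<noteq> of_int q / of_int p"
  shows "vanishes_up_to_order u x0 n"
proof -
  note op = assms(1) and sm = assms(4) and lapl = assms(5)
  have h: "h > 0" and a0: "0 < \<alpha>" and a1: "\<alpha> < 1" using assms by auto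
  have n1: "(fst em)\<^sup>2 + (snd em)\<^sup>2 = 1"
    using assms(10) by (cases em) (simp add: norm_Pair)
  obtain \<theta> where th: "fst em = cos \<theta>" "snd em = sin \<theta>"
    using sincos_total_2pi[OF n1] by blast
  have em: "em = (cos \<theta>, sin \<theta>)" using th by (cases em) simp
  have ep: "ep = (cos (\<theta> + \<alpha> * pi), sin (\<theta> + \<alpha> * pi))"
    using assms(11) em by (simp add: rot_def cos_add sin_add algebra_simps)
  have segp: "x0 + t *\<^sub>R ep \<in> \<Omega>" if "0 \<le> t" "t \<le> h" for t using assms(12) that by blast
  have segm: "x0 + t *\<^sub>R em \<in> \<Omega>" if "0 \<le> t" "t \<le> h" for t using assms(13) that by blast
  have zp: "u (x0 + t *\<^sub>R ep) = 0" if "0 \<le> t" "t \<le> h" for t using assms(14) that by blast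
  have zm: "u (x0 + t *\<^sub>R em) = 0" if "0 \<le> t" "t \<le> h" for t using assms(15) that by blast
  have vp: "dsum u ep m x0 = 0" for m by (rule ray_zero[OF op sm h segp zp])
  have vm: "dsum u em m x0 = 0" for m by (rule ray_zero[OF op sm h segm zm])
  have x0: "x0 \<in> \<Omega>" by (rule assms(6))
  have main: "m < n \<longrightarrow> (\<forall>k\<le>m. pder (m - k) k u x0 = 0)" for m
  proof (induction m rule: nat_less_induct)
    case (1 m)
    show ?case
    proof (intro impI allI)
      fix k assume mn: "m < n" and km: "k \<le> m"
      show "pder (m - k) k u x0 = 0"
      proof (cases "m = 0")
        case True
        then show ?thesis using km zm[of 0] h by (simp add: pder_00)
      next
        case False
        then have m1: "m \<ge> 1" by simp
        define c where "c k = pder (m - k) k u x0" for k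
        have rel: "c (k + 2) = - c k" if k2: "k + 2 \<le> m" for k
        proof -
          have "pder (m - k - 2 + 2) k u x0 + pder (m - k - 2) (k + 2) u x0 + lam * pder (m - k - 2) k u x0 = 0"
            by (rule LAP[OF op sm lapl x0])
          moreover have "pder ((m - 2) - k) k u x0 = 0"
          proof -
            have "m - 2 < m" "m - 2 < n" "k \<le> m - 2" using k2 mn by auto
            then show ?thesis using "1.IH" by blast
          qed
          moreover have "m - k - 2 + 2 = m - k" "(m - 2) - k = m - k - 2" "m - (k + 2) = m - k - 2"
            using k2 by auto
          ultimately show ?thesis unfolding c_def by simp
        qed
        have s: "sin (real m * (\<alpha> * pi)) \<noteq> 0"
        proof
          assume "sin (real m * (\<alpha> * pi)) = 0"
          then obtain i :: int where i: "real m * (\<alpha> * pi) = of_int i * pi"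
            using sin_zero_iff_int2 by blast
          then have mi: "real m * \<alpha> = of_int i" by simp
          have "real m > 0" using m1 by simp
          then have "real m * \<alpha> > 0" using a0 by simp
          then have "of_int i > (0::real)" using mi by simp
          then have i1: "1 \<le> i" by simp
          have "real m * \<alpha> < real m" using m1 a1 by simp
          then have i2: "i < int m" using mi by linarith
          have i3: "int m \<le> int n - 1" using mn by simp
          have "\<alpha> = of_int i / of_int (int m)" using mi m1 by (simp add: field_simps)
          then show False using assms(17) i1 i2 i3 by blast
        qed
        have v1: "(\<Sum>k\<le>m. wc (cos \<theta>, sin \<theta>) m k * c k) = 0"
          using vm[of m] unfolding dsum_def c_def em .
        have v2: "(\<Sum>k\<le>m. wc (cos (\<theta> + \<alpha> * pi), sin (\<theta> + \<alpha> * pi)) m k * c k) = 0"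
          using vp[of m] unfolding dsum_def c_def ep .
        from key_alg[OF m1 rel v1 v2 s km] show ?thesis by (simp add: c_def)
      qed
    qed
  qed
  show ?thesis
    unfolding vanishes_up_to_order_def
  proof (intro allI impI)
    fix i j assume "i + j < n"
    then have "\<forall>k\<le>i + j. pder (i + j - k) k u x0 = 0" using main[of "i + j"] by blast
    then have "pder (i + j - j) j u x0 = 0" by (drule_tac spec[of _ j]) simp
    then show "pder i j u x0 = 0" by simp
  qed
qed

end
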